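(* Let $X$, $Y$ be disjoint sets of cardinality at least two, $M\le\mathrm{Sym}(X)$ and $N\le\mathrm{Sym}(Y)$ nontrivial permutation groups, $T$ the $(|X|,|Y|)$-biregular tree, and $c$ a legal colouring. For $v\in V_X$ and $w\in V_Y$, the set $\hat{M}(v) := \{g_{\mu,v} : \mu\in M\}$ is a subgroup of the stabiliser $U_c(M,N)_v$ and $\hat{N}(w):=\{g_{\tau,w} : \tau\in N\}$ is a subgroup of $U_c(M,N)_w$. Moreover $\hat{M}(v)$ is isomorphic to $M$ and $\hat{N}(w)$ is isomorphic to $N$.
   Context: $T$ has natural bipartition $VT=V_X\sqcup V_Y$ (vertices in $V_X$ have valency $|X|$, in $V_Y$ valency $|Y|$). $A(v)$, $\overline{A}(v)$ are the sets of arcs with origin, resp. terminus, $v$. A legal colouring is a map $c:AT\to X\cup Y$ restricting to a bijection $A(v)\to X$ for $v\in V_X$, to a bijection $A(v)\to Y$ for $v\in V_Y$, and constant on each $\overline{A}(v)$. $U_c(M,N)$ is the group of $g\in\mathrm{Aut}(T)$ with $gV_X=V_X$ and $c|_{A(gv)}\circ g|_{A(v)}\circ(c|_{A(v)})^{-1}$ in $M$ for $v\in V_X$ and in $N$ for $v\in V_Y$. For $\mu\in M$, let $\hat\mu\in\mathrm{Sym}(X\cup Y)$ equal $\mu$ on $X$ and the identity on $Y$; for $v\in V_X$, $g_{\mu,v}$ denotes the unique $g\in\mathrm{Aut}(T)$ with $gV_X=V_X$, $gv=v$ and $c=\hat\mu\circ c\circ g$ (such $g$ exists and is unique, and lies in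 $U_c(M,N)$). For $\tau\in N$ and $w\in V_Y$, $\hat\tau$ (equal to $\tau$ on $Y$ and the identity on $X$) and $g_{\tau,w}$ are defined analogously. *)

theory Defs
  imports "HOL-Algebra.Bij"
begin

text \<open>A tree on the vertex type 'v, given by its (symmetric, irreflexive) adjacency
  relation E; arcs are the ordered pairs in E.\<close>

definition is_tree :: "('v \<times> 'v) set \<Rightarrow> bool" where
  "is_tree E \<longleftrightarrow> sym E \<and> irrefl E \<and> (\<forall>u w. (u, w) \<in> E\<^sup>*) \<and>
     \<not> (\<exists>xs. length xs \<ge> 3 \<and> distinct xs \<and>
          (\<forall>i. Suc i < length xs \<longrightarrow> (xs ! i, xs ! Suc i) \<in> E) \<and> (last xs, hd xs) \<in> E)"

definition arcs_out :: "('v \<times> 'v) set \<Rightarrow> 'v \<Rightarrow> ('v \<times> 'v) set" where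
  "arcs_out E v = {a \<in> E. fst a = v}"

definition arcs_in :: "('v \<times> 'v) set \<Rightarrow> 'v \<Rightarrow> ('v \<times> 'v) set" where
  "arcs_in E v = {a \<in> E. snd a = v}"

definition Aut :: "('v \<times> 'v) set \<Rightarrow> ('v \<Rightarrow> 'v) set" where
  "Aut E = {g. bij g \<and> (\<forall>u w. (u, w) \<in> E \<longleftrightarrow> (g u, g w) \<in> E)}"

definition amap :: "('v \<Rightarrow> 'v) \<Rightarrow> 'v \<times> 'v \<Rightarrow> 'v \<times> 'v" where
  "amap g a = (g (fst a), g (snd a))"

definition bipartition :: "('v \<times> 'v) set \<Rightarrow> 'v set \<Rightarrow> 'v set \<Rightarrow> bool" where
  "bipartition E VX VY \<longleftrightarrow> VX \<inter> VY = {} \<and> VX \<union> VY = UNIV \<and>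
     (\<forall>(u, w) \<in> E. (u \<in> VX \<and> w \<in> VY) \<or> (u \<in> VY \<and> w \<in> VX))"

definition legal_colouring ::
  "('v \<times> 'v) set \<Rightarrow> 'v set \<Rightarrow> 'v set \<Rightarrow> 'c set \<Rightarrow> 'c set \<Rightarrow> ('v \<times> 'v \<Rightarrow> 'c) \<Rightarrow> bool" where
  "legal_colouring E VX VY X Y c \<longleftrightarrow>
     (\<forall>v \<in> VX. bij_betw c (arcs_out E v) X) \<and>
     (\<forall>v \<in> VY. bij_betw c (arcs_out E v) Y) \<and>
     (\<forall>v. \<forall>a \<in> arcs_in E v. \<forall>b \<in> arcs_in E v. c a = c b)"

text \<open>Local action  c|A(gv) o g|A(v) o (c|A(v))^-1  as an element of Sym(S)
  (extensional on S, as in HOL-Algebra's BijGroup S).\<close>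
definition local_action ::
  "('v \<times> 'v) set \<Rightarrow> ('v \<times> 'v \<Rightarrow> 'c) \<Rightarrow> 'c set \<Rightarrow> ('v \<Rightarrow> 'v) \<Rightarrow> 'v \<Rightarrow> 'c \<Rightarrow> 'c" where
  "local_action E c S g v = restrict (\<lambda>x. c (amap g (the_inv_into (arcs_out E v) c x))) S"

definition U_c ::
  "('v \<times> 'v) set \<Rightarrow> 'v set \<Rightarrow> 'v set \<Rightarrow> 'c set \<Rightarrow> 'c set \<Rightarrow> ('v \<times> 'v \<Rightarrow> 'c)
    \<Rightarrow> ('c \<Rightarrow> 'c) set \<Rightarrow> ('c \<Rightarrow> 'c) set \<Rightarrow> ('v \<Rightarrow> 'v) set" where
  "U_c E VX VY X Y c M N = {g \<in> Aut E. g ` VX = VX \<and>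
      (\<forall>v \<in> VX. local_action E c X g v \<in> M) \<and> (\<forall>v \<in> VY. local_action E c Y g v \<in> N)}"

definition stab :: "('v \<Rightarrow> 'v) set \<Rightarrow> 'v \<Rightarrow> ('v \<Rightarrow> 'v) set" where
  "stab G v = {g \<in> G. g v = v}"

definition hat :: "'c set \<Rightarrow> ('c \<Rightarrow> 'c) \<Rightarrow> 'c \<Rightarrow> 'c" where
  "hat S \<mu> z = (if z \<in> S then \<mu> z else z)"

definition g_at ::
  "('v \<times> 'v) set \<Rightarrow> 'v set \<Rightarrow> ('v \<times> 'v \<Rightarrow> 'c) \<Rightarrow> 'c set \<Rightarrow> ('c \<Rightarrow> 'c) \<Rightarrow> 'v \<Rightarrow> 'v \<Rightarrow> 'v" where
  "g_at E VX c S \<mu> v = (THE g. g \<in> Aut E \<and> g ` VX = VX \<and> g v = v \<and>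
       (\<forall>a \<in> E. c a = hat S \<mu> (c (amap g a))))"

end

theory Submission
  imports Defs
begin


abbreviation ch :: "('v \<times> 'v) set \<Rightarrow> 'v list \<Rightarrow> bool" where
  "ch E xs \<equiv> successively (\<lambda>x y. (x, y) \<in> E) xs"

definition spath :: "('v \<times> 'v) set \<Rightarrow> 'v list \<Rightarrow> bool" where
  "spath E xs \<longleftrightarrow> xs \<noteq> [] \<and> ch E xs \<and> distinct xs"

lemma tree_sym: "is_tree E \<Longrightarrow> (a, b) \<in> E \<Longrightarrow> (b, a) \<in> E"
  unfolding is_tree_def by (meson symD)

lemma tree_irrefl: "is_tree E \<Longrightarrow> (a, a) \<notin> E"
  unfolding is_tree_def by (meson irrefl_def)

lemma tree_conn: "is_tree E \<Longrightarrow> (u, w) \<in> E\<^sup>*"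
  unfolding is_tree_def by blast

lemma tree_nocyc: "is_tree E \<Longrightarrow> length xs \<ge> 3 \<Longrightarrow> distinct xs \<Longrightarrow> ch E xs \<Longrightarrow> (last xs, hd xs) \<in> E \<Longrightarrow> False"
  unfolding is_tree_def successively_conv_nth by blast

lemma spath_prefix: "spath E (a @ x # b) \<Longrightarrow> spath E (a @ [x])"
  unfolding spath_def
  by (metis append.assoc append_Cons append_Nil distinct_append not_Cons_self2 snoc_eq_iff_butlast successively_append_iff)

lemma spath_suffix: "spath E (a @ x # b) \<Longrightarrow> spath E (x # b)"
  unfolding spath_def
  by (simp add: successively_append_iff)

lemma spath_unique:
  assumes tree: "is_tree E"
  shows "spath E xs \<Longrightarrow> spath E ys \<Longrightarrow> hd xs = hd ys \<Longrightarrow> last xs = last ys \<Longrightarrow> xs = ys"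
proof (induction "length xs + length ys" arbitrary: xs ys rule: less_induct)
  case less
  show ?case
  proof (cases "\<exists>a b cc d x. xs = a @ x # b \<and> ys = cc @ x # d \<and> (a \<noteq> [] \<or> cc \<noteq> []) \<and> (b \<noteq> [] \<or> d \<noteq> [])")
    case True
    then obtain a b cc d x where xs: "xs = a @ x # b" and ys: "ys = cc @ x # d"
      and h1: "a \<noteq> [] \<or> cc \<noteq> []" and h2: "b \<noteq> [] \<or> d \<noteq> []" by blast
    have "a @ [x] = cc @ [x]"
    proof (rule less.hyps)
      show "length (a @ [x]) + length (cc @ [x]) < length xs + length ys" using h2 xs ys by auto
      show "spath E (a @ [x])" using less.prems(1) xs spath_prefix by metis
      show "spath E (cc @ [x])" using less.prems(2) ys spath_prefix by metis
      show "hd (a @ [x]) = hd (cc @ [x])" using less.prems(3) xs ys by (cases a; cases cc) auto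
    qed simp
    moreover have "x # b = x # d"
    proof (rule less.hyps)
      show "length (x # b) + length (x # d) < length xs + length ys" using h1 xs ys by auto
      show "spath E (x # b)" using less.prems(1) xs spath_suffix by metis
      show "spath E (x # d)" using less.prems(2) ys spath_suffix by metis
      show "last (x # b) = last (x # d)" using less.prems(4) xs ys by simp
    qed simp
    ultimately show ?thesis using xs ys by simp
  next
    case False
    have xne: "xs \<noteq> []" and yne: "ys \<noteq> []" and dx: "distinct xs" and dy: "distinct ys"
      and cx: "ch E xs" and cy: "ch E ys"
      using less.prems unfolding spath_def by auto
    obtain s r where xs: "xs = s # r" using xne by (cases xs) auto
    obtain s' r' where ys: "ys = s' # r'" using yne by (cases ys) auto
    have ss: "s' = s" using less.prems(3) xs ys by simp
    show ?thesis
    proof (cases "r = [] \<or> r' = []")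
      case True
      then show ?thesis
      proof
        assume r0: "r = []"
        then have ly: "last ys = s" using less.prems(4) xs by simp
        have "r' = []"
        proof (rule ccontr)
          assume "r' \<noteq> []"
          then have "last ys \<in> set r'" using ys by simp
          then show False using ly dy ys ss by simp
        qed
        then show ?thesis using xs ys ss r0 by simp
      next
        assume r0: "r' = []"
        then have ly: "last xs = s" using less.prems(4) ys ss by simp
        have "r = []"
        proof (rule ccontr)
          assume "r \<noteq> []"
          then have "last xs \<in> set r" using xs by simp
          then show False using ly dx xs by simp
        qed
        then show ?thesis using xs ys ss r0 by simp
      qed
    next
      case False
      then obtain xm z where r: "r = xm @ [z]" by (metis rev_exhaust)
      obtain ym z' where r': "r' = ym @ [z']" using False by (metis rev_exhaust)
      have zz: "z' = z" using less.prems(4) xs ys r r' by simp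
      have xs2: "xs = s # xm @ [z]" and ys2: "ys = s # ym @ [z]" using xs ys r r' zz ss by auto
      show ?thesis
      proof (cases "xm = [] \<and> ym = []")
        case True then show ?thesis using xs2 ys2 by simp
      next
        case nt: False
        have disj: "y \<notin> set xs" if yin: "y \<in> set ym" for y
        proof
          assume "y \<in> set xs"
          then obtain a b where "xs = a @ y # b" by (meson split_list)
          moreover obtain ym1 ym2 where "ym = ym1 @ y # ym2" using yin by (meson split_list)
          ultimately have "xs = a @ y # b \<and> ys = (s # ym1) @ y # (ym2 @ [z]) \<and> (a \<noteq> [] \<or> s # ym1 \<noteq> []) \<and> (b \<noteq> [] \<or> ym2 @ [z] \<noteq> [])"
            using ys2 by simp
          then show False using \<open>\<not> (\<exists>a b cc d x. _)\<close> by blast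
        qed
        have cy2: "ch E ((s # ym) @ [z])" using cy ys2 by simp
        have cym': "ch E (ym @ [z])" using cy ys2 by (simp add: successively_Cons)
        have cym: "ch E ym" using cym' successively_append_iff by blast
        have "ch E (xs @ rev ym)"
        proof -
          have "ch E (rev ym)"
            using cym tree_sym[OF tree] by (simp add: successively_mono[of _ ym])
          moreover have "(last xs, hd (rev ym)) \<in> E" if "ym \<noteq> []"
          proof -
            have "(last (s # ym), z) \<in> E" using cy2 successively_append_iff[of _ "s # ym" "[z]"] by simp
            then show ?thesis using that xs2 tree_sym[OF tree] by (simp add: hd_rev)
          qed
          ultimately show ?thesis using cx successively_append_iff by blast
        qed
        moreover have "distinct (xs @ rev ym)" using dx dy disj ys2 by auto
        moreover have "length xm + length ym \<ge> 1" using nt by (cases xm; cases ym) auto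
        then have "length (xs @ rev ym) \<ge> 3" using xs2 by simp
        moreover have "(last (xs @ rev ym), hd (xs @ rev ym)) \<in> E"
        proof (cases "ym = []")
          case True
          then have "(s, z) \<in> E" using cy ys2 by simp
          then show ?thesis using True xs2 tree_sym[OF tree] by simp
        next
          case False
          then have "(s, hd ym) \<in> E" using cy ys2 by (cases ym) auto
          then show ?thesis using False xs2 tree_sym[OF tree] by (simp add: last_rev)
        qed
        ultimately show ?thesis using tree_nocyc[OF tree] by blast
      qed
    qed
  qed
qed



definition nb :: "('v \<times> 'v) set \<Rightarrow> ('v \<times> 'v \<Rightarrow> 'c) \<Rightarrow> 'v \<Rightarrow> 'c \<Rightarrow> 'v" where
  "nb E c u x = (THE u'. (u, u') \<in> E \<and> c (u, u') = x)"

primrec walkw :: "('v \<times> 'v) set \<Rightarrow> ('v \<times> 'v \<Rightarrow> 'c) \<Rightarrow> 'v \<Rightarrow> 'c list \<Rightarrow> 'v" where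
  "walkw E c u [] = u"
| "walkw E c u (x # s) = walkw E c (nb E c u x) s"

fun cw :: "('v \<times> 'v \<Rightarrow> 'c) \<Rightarrow> 'v list \<Rightarrow> 'c list" where
  "cw c (x # y # r) = c (x, y) # cw c (y # r)"
| "cw c _ = []"

lemma walkw_snoc: "walkw E c u (s @ [x]) = nb E c (walkw E c u s) x"
  by (induction s arbitrary: u) auto

lemma cw_snoc: "xs \<noteq> [] \<Longrightarrow> cw c (xs @ [b]) = cw c xs @ [c (last xs, b)]"
proof (induction xs rule: induct_list012)
  case (3 x y zs)
  then show ?case by simp
qed auto

locale tc =
  fixes E :: "('v \<times> 'v) set" and VX VY :: "'v set" and X Y :: "'c set"
    and c :: "'v \<times> 'v \<Rightarrow> 'c" and v :: 'v
  assumes tree: "is_tree E" and bip: "bipartition E VX VY"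
    and col: "legal_colouring E VX VY X Y c" and disj: "X \<inter> Y = {}" and vX: "v \<in> VX"
begin

lemma VY_eq: "VY = - VX"
  using bip unfolding bipartition_def by auto

lemma bipE: "(a, b) \<in> E \<Longrightarrow> (a \<in> VX \<and> b \<in> VY) \<or> (a \<in> VY \<and> b \<in> VX)"
proof -
  assume ab: "(a, b) \<in> E"
  have "\<forall>(u, w) \<in> E. (u \<in> VX \<and> w \<in> VY) \<or> (u \<in> VY \<and> w \<in> VX)"
    using bip unfolding bipartition_def by blast
  then show ?thesis using ab by blast
qed

lemma edge_side: "(a, b) \<in> E \<Longrightarrow> (a \<in> VX \<longleftrightarrow> b \<notin> VX)"
  using bipE[of a b] VY_eq by blast

lemma colVX: "a \<in> VX \<Longrightarrow> bij_betw c (arcs_out E a) X"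
  using col unfolding legal_colouring_def by blast

lemma colVY: "a \<in> VY \<Longrightarrow> bij_betw c (arcs_out E a) Y"
  using col unfolding legal_colouring_def by blast

lemma bij_out: "bij_betw c (arcs_out E a) (if a \<in> VX then X else Y)"
proof (cases "a \<in> VX")
  case True
  then show ?thesis using colVX by simp
next
  case False
  then have "a \<in> VY" using VY_eq by simp
  then show ?thesis using False colVY by simp
qed

lemma img_out: "c ` arcs_out E a = (if a \<in> VX then X else Y)"
  using bij_out[of a] by (simp add: bij_betw_def)

lemma inj_out: "inj_on c (arcs_out E a)"
  using bij_out[of a] by (simp add: bij_betw_def)

lemma in_out: "(a, b) \<in> E \<Longrightarrow> (a, b) \<in> arcs_out E a"
  unfolding arcs_out_def by simp

lemma colX: "(a, b) \<in> E \<Longrightarrow> a \<in> VX \<Longrightarrow> c (a, b) \<in> X"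
proof -
  assume "(a, b) \<in> E" "a \<in> VX"
  then have "c (a, b) \<in> c ` arcs_out E a" using in_out by blast
  then show ?thesis using img_out[of a] \<open>a \<in> VX\<close> by simp
qed

lemma colY: "(a, b) \<in> E \<Longrightarrow> a \<notin> VX \<Longrightarrow> c (a, b) \<in> Y"
proof -
  assume "(a, b) \<in> E" "a \<notin> VX"
  then have "c (a, b) \<in> c ` arcs_out E a" using in_out by blast
  then show ?thesis using img_out[of a] \<open>a \<notin> VX\<close> by simp
qed

lemma col_inj: "(a, b) \<in> E \<Longrightarrow> (a, b') \<in> E \<Longrightarrow> c (a, b) = c (a, b') \<Longrightarrow> b = b'"
proof -
  assume h: "(a, b) \<in> E" "(a, b') \<in> E" "c (a, b) = c (a, b')"
  have "(a, b) = (a, b')" by (rule inj_onD[OF inj_out h(3) in_out[OF h(1)] in_out[OF h(2)]])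
  then show ?thesis by simp
qed

lemma col_ex0: "x \<in> (if a \<in> VX then X else Y) \<Longrightarrow> \<exists>b. (a, b) \<in> E \<and> c (a, b) = x"
proof -
  assume x: "x \<in> (if a \<in> VX then X else Y)"
  have "c ` arcs_out E a = (if a \<in> VX then X else Y)" by (rule img_out)
  then obtain e where e: "e \<in> arcs_out E a" "c e = x" using x by (metis imageE)
  then have "e = (a, snd e)" unfolding arcs_out_def by auto
  then show ?thesis using e unfolding arcs_out_def by (metis (mono_tags, lifting) mem_Collect_eq)
qed

lemma col_ex: "a \<in> VX \<Longrightarrow> x \<in> X \<Longrightarrow> \<exists>b. (a, b) \<in> E \<and> c (a, b) = x"
  using col_ex0[of x a] by simp

lemma col_exY: "a \<notin> VX \<Longrightarrow> x \<in> Y \<Longrightarrow> \<exists>b. (a, b) \<in> E \<and> c (a, b) = x"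
  using col_ex0[of x a] by simp

lemma inarc: "(x, z) \<in> E \<Longrightarrow> (y, z) \<in> E \<Longrightarrow> c (x, z) = c (y, z)"
proof -
  assume h: "(x, z) \<in> E" "(y, z) \<in> E"
  have all: "\<forall>a \<in> arcs_in E z. \<forall>b \<in> arcs_in E z. c a = c b"
    using col unfolding legal_colouring_def by blast
  have "(x, z) \<in> arcs_in E z" "(y, z) \<in> arcs_in E z" using h unfolding arcs_in_def by simp_all
  then show ?thesis using all by blast
qed

definition valid :: "'v \<Rightarrow> 'c \<Rightarrow> bool" where
  "valid a x \<longleftrightarrow> (a \<in> VX \<longrightarrow> x \<in> X) \<and> (a \<notin> VX \<longrightarrow> x \<in> Y)"

lemma nb_edge: "valid a x \<Longrightarrow> (a, nb E c a x) \<in> E \<and> c (a, nb E c a x) = x"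
proof -
  assume "valid a x"
  then obtain b where b: "(a, b) \<in> E \<and> c (a, b) = x"
    using col_ex col_exY unfolding valid_def by blast
  show ?thesis unfolding nb_def
    by (rule theI[of _ b]) (use b col_inj in blast)+
qed

lemma nb_eq: "(a, b) \<in> E \<Longrightarrow> nb E c a (c (a, b)) = b"
  unfolding nb_def by (rule the_equality) (use col_inj in blast)+

lemma walkw_cw: "ch E p \<Longrightarrow> p \<noteq> [] \<Longrightarrow> walkw E c (hd p) (cw c p) = last p"
proof (induction p rule: induct_list012)
  case (3 x y zs)
  then show ?case by (simp add: nb_eq)
qed auto

end



context tc begin

lemma spath_exists: "\<exists>p. spath E p \<and> hd p = v \<and> last p = u"
proof -
  have "(v, u) \<in> E\<^sup>*" by (rule tree_conn[OF tree])
  then show ?thesis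
  proof (induction rule: rtrancl_induct)
    case base
    show ?case by (rule exI[of _ "[v]"]) (simp add: spath_def)
  next
    case (step u u')
    then obtain p where p: "spath E p" "hd p = v" "last p = u" by blast
    show ?case
    proof (cases "u' \<in> set p")
      case False
      have "spath E (p @ [u'])" using p False step(2) unfolding spath_def by (simp add: successively_append_iff)
      moreover have "hd (p @ [u']) = v" using p unfolding spath_def by simp
      ultimately show ?thesis by (intro exI[of _ "p @ [u']"]) simp
    next
      case True
      then obtain a b where ab: "p = a @ u' # b" by (meson split_list)
      have "spath E (a @ [u'])" using p(1) unfolding ab by (rule spath_prefix)
      moreover have "hd (a @ [u']) = v" using p(2) ab by (cases a) auto
      ultimately show ?thesis by (intro exI[of _ "a @ [u']"]) simp
    qed
  qed
qed

definition P :: "'v \<Rightarrow> 'v list" where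
  "P u = (THE p. spath E p \<and> hd p = v \<and> last p = u)"

lemma P_prop: "spath E (P u) \<and> hd (P u) = v \<and> last (P u) = u"
proof -
  obtain p where p: "spath E p \<and> hd p = v \<and> last p = u" using spath_exists by blast
  show ?thesis unfolding P_def
  proof (rule theI[of _ p])
    show "spath E p \<and> hd p = v \<and> last p = u" by (rule p)
    fix q assume "spath E q \<and> hd q = v \<and> last q = u"
    then show "q = p" using p spath_unique[OF tree, of q p] by simp
  qed
qed

lemma P_eq: "spath E p \<Longrightarrow> hd p = v \<Longrightarrow> last p = u \<Longrightarrow> P u = p"
  using P_prop[of u] spath_unique[OF tree, of "P u" p] by simp

lemma P_edge: "(u, u') \<in> E \<Longrightarrow> P u' = P u @ [u'] \<or> P u = P u' @ [u]"
proof -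
  assume e: "(u, u') \<in> E"
  have sp: "spath E (P u)" and hp: "hd (P u) = v" and lp: "last (P u) = u" using P_prop by auto
  show ?thesis
  proof (cases "u' \<in> set (P u)")
    case False
    have "spath E (P u @ [u'])" using sp lp False e unfolding spath_def by (simp add: successively_append_iff)
    moreover have "hd (P u @ [u']) = v" using sp hp unfolding spath_def by simp
    ultimately have "P u' = P u @ [u']" using lp by (intro P_eq) simp_all
    then show ?thesis by simp
  next
    case True
    then obtain a b where ab: "P u = a @ u' # b" by (meson split_list)
    have "spath E (a @ [u'])" using sp unfolding ab by (rule spath_prefix)
    moreover have "hd (a @ [u']) = v" using hp ab by (cases a) auto
    ultimately have Pu': "P u' = a @ [u']" by (intro P_eq) simp_all
    have s1: "spath E (u' # b)" using sp unfolding ab by (rule spath_suffix)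
    have l1: "last (u' # b) = u" using lp ab by simp
    have s2: "spath E [u', u]" using tree_sym[OF tree e] tree_irrefl[OF tree, of u] e
      unfolding spath_def by auto
    have "u' # b = [u', u]" using spath_unique[OF tree s1 s2] l1 by simp
    then have "P u = P u' @ [u]" using ab Pu' by simp
    then show ?thesis by simp
  qed
qed

lemma twist_walk:
  assumes sX: "\<forall>x\<in>X. \<sigma> x \<in> X" and sY: "\<forall>y\<in>Y. \<sigma> y = y"
  shows "ch E p \<Longrightarrow> p \<noteq> [] \<Longrightarrow> hd p = v \<Longrightarrow>
    (walkw E c v (map \<sigma> (cw c p)) \<in> VX \<longleftrightarrow> last p \<in> VX) \<and>
    (\<forall>x y. (x, walkw E c v (map \<sigma> (cw c p))) \<in> E \<longrightarrow> (y, last p) \<in> E \<longrightarrow>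
        c (x, walkw E c v (map \<sigma> (cw c p))) = \<sigma> (c (y, last p)))"
proof (induction p rule: rev_induct)
  case Nil then show ?case by simp
next
  case (snoc b p)
  show ?case
  proof (cases "p = []")
    case True
    then have b: "b = v" using snoc.prems by simp
    have cv: "c (x, v) = \<sigma> (c (y, v))" if "(x, v) \<in> E" "(y, v) \<in> E" for x y
    proof -
      have "y \<notin> VX" using edge_side[OF that(2)] vX by blast
      then have "c (y, v) \<in> Y" using colY that(2) by blast
      then show ?thesis using sY inarc[OF that] by simp
    qed
    have w: "walkw E c v (map \<sigma> (cw c (p @ [b]))) = v" using True by simp
    have l: "last (p @ [b]) = v" using b by simp
    show ?thesis unfolding w l using vX cv by blast
  next
    case False
    let ?z0 = "walkw E c v (map \<sigma> (cw c p))"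
    let ?a = "last p"
    have chp: "ch E p" and ab: "(?a, b) \<in> E"
      using snoc.prems(1) False unfolding successively_append_iff[of _ p "[b]"] by simp_all
    have hp: "hd p = v" using snoc.prems False by simp
    from snoc.IH[OF chp False hp] have side0: "?z0 \<in> VX \<longleftrightarrow> ?a \<in> VX" by blast
    have eqz: "walkw E c v (map \<sigma> (cw c (p @ [b]))) = nb E c ?z0 (\<sigma> (c (?a, b)))"
      using False by (simp add: cw_snoc walkw_snoc)
    have val: "valid ?z0 (\<sigma> (c (?a, b)))"
    proof (cases "?a \<in> VX")
      case True
      then show ?thesis unfolding valid_def using side0 colX[OF ab] sX by simp
    next
      case False
      then show ?thesis unfolding valid_def using side0 colY[OF ab] sY by simp
    qed
    note nbe = nb_edge[OF val]
    have side1: "nb E c ?z0 (\<sigma> (c (?a, b))) \<in> VX \<longleftrightarrow> b \<in> VX"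
      using edge_side[OF conjunct1[OF nbe]] edge_side[OF ab] side0 by auto
    have col1: "c (x, nb E c ?z0 (\<sigma> (c (?a, b)))) = \<sigma> (c (y, b))"
      if "(x, nb E c ?z0 (\<sigma> (c (?a, b)))) \<in> E" "(y, b) \<in> E" for x y
      using inarc[OF that(1) conjunct1[OF nbe]] conjunct2[OF nbe] inarc[OF that(2) ab] by simp
    have l: "last (p @ [b]) = b" by simp
    show ?thesis unfolding eqz l using side1 col1 by blast
  qed
qed

definition gtw :: "('c \<Rightarrow> 'c) \<Rightarrow> 'v \<Rightarrow> 'v" where
  "gtw \<sigma> u = walkw E c v (map \<sigma> (cw c (P u)))"

lemma gtw_props:
  assumes sX: "\<forall>x\<in>X. \<sigma> x \<in> X" and sY: "\<forall>y\<in>Y. \<sigma> y = y"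
  shows "gtw \<sigma> v = v" and "gtw \<sigma> u \<in> VX \<longleftrightarrow> u \<in> VX"
    and "(a, b) \<in> E \<Longrightarrow> (gtw \<sigma> a, gtw \<sigma> b) \<in> E \<and> c (gtw \<sigma> a, gtw \<sigma> b) = \<sigma> (c (a, b))"
proof -
  have "P v = [v]" by (rule P_eq) (auto simp: spath_def)
  then show "gtw \<sigma> v = v" unfolding gtw_def by simp
  have tw: "(gtw \<sigma> u \<in> VX \<longleftrightarrow> u \<in> VX) \<and>
    (\<forall>x y. (x, gtw \<sigma> u) \<in> E \<longrightarrow> (y, u) \<in> E \<longrightarrow> c (x, gtw \<sigma> u) = \<sigma> (c (y, u)))" for u
    using twist_walk[OF sX sY, of "P u"] P_prop[of u] unfolding gtw_def spath_def by auto
  then show "gtw \<sigma> u \<in> VX \<longleftrightarrow> u \<in> VX" by blast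
  assume ab: "(a, b) \<in> E"
  have val: "valid (gtw \<sigma> x) (\<sigma> (c (x, y)))" if "(x, y) \<in> E" for x y
    unfolding valid_def using tw[of x] colX[OF that] colY[OF that] sX sY by auto
  show "(gtw \<sigma> a, gtw \<sigma> b) \<in> E \<and> c (gtw \<sigma> a, gtw \<sigma> b) = \<sigma> (c (a, b))"
    using P_edge[OF ab]
  proof
    assume Pb: "P b = P a @ [b]"
    have "gtw \<sigma> b = nb E c (gtw \<sigma> a) (\<sigma> (c (a, b)))"
      unfolding gtw_def Pb using P_prop[of a] unfolding spath_def by (simp add: cw_snoc walkw_snoc)
    then show ?thesis using nb_edge[OF val[OF ab]] by simp
  next
    assume Pa: "P a = P b @ [a]"
    have ba: "(b, a) \<in> E" by (rule tree_sym[OF tree ab])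
    have "gtw \<sigma> a = nb E c (gtw \<sigma> b) (\<sigma> (c (b, a)))"
      unfolding gtw_def Pa using P_prop[of b] unfolding spath_def by (simp add: cw_snoc walkw_snoc)
    then have e: "(gtw \<sigma> b, gtw \<sigma> a) \<in> E" using nb_edge[OF val[OF ba]] by simp
    then have e2: "(gtw \<sigma> a, gtw \<sigma> b) \<in> E" by (rule tree_sym[OF tree])
    then show ?thesis using tw[of b] ab by blast
  qed
qed

lemma ext_unique:
  assumes e1: "\<forall>a b. (a, b) \<in> E \<longrightarrow> (h1 a, h1 b) \<in> E"
    and e2: "\<forall>a b. (a, b) \<in> E \<longrightarrow> (h2 a, h2 b) \<in> E"
    and cc: "\<forall>a b. (a, b) \<in> E \<longrightarrow> c (h1 a, h1 b) = c (h2 a, h2 b)"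
    and hv: "h1 v = h2 v"
  shows "h1 = h2"
proof
  fix u
  have "(v, u) \<in> E\<^sup>*" by (rule tree_conn[OF tree])
  then show "h1 u = h2 u"
  proof (induction rule: rtrancl_induct)
    case base then show ?case by (rule hv)
  next
    case (step y z)
    have a1: "(h1 y, h1 z) \<in> E" using e1 step(2) by blast
    have a2: "(h1 y, h2 z) \<in> E" using e2 step(2) step(3) by metis
    have "c (h1 y, h1 z) = c (h1 y, h2 z)" using cc step(2) step(3) by metis
    then show ?case using col_inj[OF a1 a2] by simp
  qed
qed

end



lemma Aut_iff: assumes "g \<in> Aut E" shows "(u, w) \<in> E \<longleftrightarrow> (g u, g w) \<in> E"
proof -
  have "\<forall>u w. (u, w) \<in> E \<longleftrightarrow> (g u, g w) \<in> E"
    using assms unfolding Aut_def mem_Collect_eq by (rule conjunct2)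
  then have "\<forall>w. (u, w) \<in> E \<longleftrightarrow> (g u, g w) \<in> E" by (rule spec)
  then show ?thesis by (rule spec)
qed

lemma Aut_bij: "g \<in> Aut E \<Longrightarrow> bij g"
  unfolding Aut_def mem_Collect_eq by (rule conjunct1)

lemma AutI: assumes "bij g" "\<And>u w. (u, w) \<in> E \<longleftrightarrow> (g u, g w) \<in> E" shows "g \<in> Aut E"
  unfolding Aut_def mem_Collect_eq
proof (rule conjI)
  show "bij g" by (rule assms(1))
  show "\<forall>u w. (u, w) \<in> E \<longleftrightarrow> (g u, g w) \<in> E" using assms(2) by (intro allI)
qed

lemma Aut_edge: assumes "g \<in> Aut E" "(a, b) \<in> E" shows "(g a, g b) \<in> E"
  using iffD1[OF Aut_iff[OF assms(1)] assms(2)] .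

lemma Aut_comp: "g \<in> Aut E \<Longrightarrow> h \<in> Aut E \<Longrightarrow> g \<circ> h \<in> Aut E"
proof -
  assume g: "g \<in> Aut E" and h: "h \<in> Aut E"
  show ?thesis
  proof (rule AutI)
    show "bij (g \<circ> h)" using Aut_bij[OF g] Aut_bij[OF h] by (rule bij_comp[rotated])
    fix u w
    have "(u, w) \<in> E \<longleftrightarrow> (h u, h w) \<in> E" by (rule Aut_iff[OF h])
    also have "\<dots> \<longleftrightarrow> (g (h u), g (h w)) \<in> E" by (rule Aut_iff[OF g])
    finally show "(u, w) \<in> E \<longleftrightarrow> ((g \<circ> h) u, (g \<circ> h) w) \<in> E" by simp
  qed
qed

lemma Aut_id: "id \<in> Aut E"
  by (rule AutI) simp_all

lemma amap_E: "g \<in> Aut E \<Longrightarrow> a \<in> E \<Longrightarrow> amap g a \<in> E"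
  unfolding amap_def using Aut_edge[of g E "fst a" "snd a"] by simp

lemma hat_in: "x \<in> S \<Longrightarrow> hat S \<mu> x = \<mu> x" and hat_out: "x \<notin> S \<Longrightarrow> hat S \<mu> x = x"
  by (simp_all add: hat_def)

context tc begin

definition Q :: "('c \<Rightarrow> 'c) \<Rightarrow> ('v \<Rightarrow> 'v) \<Rightarrow> bool" where
  "Q \<rho> g \<longleftrightarrow> g \<in> Aut E \<and> (\<forall>u. g u \<in> VX \<longleftrightarrow> u \<in> VX) \<and> g v = v \<and> (\<forall>a\<in>E. c a = hat X \<rho> (c (amap g a)))"

lemma aut_ex1:
  assumes rho: "bij_betw \<rho> X X"
  shows "\<exists>!g. Q \<rho> g"
proof -
  define \<sigma> where "\<sigma> = hat X (inv_into X \<rho>)"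
  define \<sigma>' where "\<sigma>' = hat X \<rho>"
  have imX: "\<rho> ` X = X" using rho by (rule bij_betw_imp_surj_on)
  have injX: "inj_on \<rho> X" using rho by (rule bij_betw_imp_inj_on)
  have sX: "\<forall>x\<in>X. \<sigma> x \<in> X" unfolding \<sigma>_def hat_def using imX inv_into_into by metis
  have sY: "\<forall>y\<in>Y. \<sigma> y = y" unfolding \<sigma>_def hat_def using disj by auto
  have s'X: "\<forall>x\<in>X. \<sigma>' x \<in> X" unfolding \<sigma>'_def hat_def using imX by auto
  have s'Y: "\<forall>y\<in>Y. \<sigma>' y = y" unfolding \<sigma>'_def hat_def using disj by auto
  have ss': "\<sigma> (\<sigma>' z) = z" for z
  proof (cases "z \<in> X")
    case True
    then have "\<rho> z \<in> X" using imX by auto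
    then show ?thesis using True injX unfolding \<sigma>_def \<sigma>'_def hat_def by simp
  next
    case False then show ?thesis unfolding \<sigma>_def \<sigma>'_def hat_def by simp
  qed
  have s's: "\<sigma>' (\<sigma> z) = z" for z
  proof (cases "z \<in> X")
    case True
    then have "inv_into X \<rho> z \<in> X" using imX inv_into_into by metis
    moreover have "\<rho> (inv_into X \<rho> z) = z" using True imX f_inv_into_f by metis
    ultimately show ?thesis using True unfolding \<sigma>_def \<sigma>'_def hat_def by simp
  next
    case False then show ?thesis unfolding \<sigma>_def \<sigma>'_def hat_def by simp
  qed
  define g where "g = gtw \<sigma>"
  define g' where "g' = gtw \<sigma>'"
  have gv: "g v = v" and gside: "\<And>u. g u \<in> VX \<longleftrightarrow> u \<in> VX"
    and ge: "\<And>a b. (a, b) \<in> E \<Longrightarrow> (g a, g b) \<in> E \<and> c (g a, g b) = \<sigma> (c (a, b))"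
    unfolding g_def using gtw_props[OF sX sY] by auto
  have g'v: "g' v = v" and g'side: "\<And>u. g' u \<in> VX \<longleftrightarrow> u \<in> VX"
    and g'e: "\<And>a b. (a, b) \<in> E \<Longrightarrow> (g' a, g' b) \<in> E \<and> c (g' a, g' b) = \<sigma>' (c (a, b))"
    unfolding g'_def using gtw_props[OF s'X s'Y] by auto
  have gg': "g \<circ> g' = id"
  proof (rule ext_unique)
    show "\<forall>a b. (a, b) \<in> E \<longrightarrow> ((g \<circ> g') a, (g \<circ> g') b) \<in> E" using ge g'e by simp
    show "\<forall>a b. (a, b) \<in> E \<longrightarrow> (id a, id b) \<in> E" by simp
    show "\<forall>a b. (a, b) \<in> E \<longrightarrow> c ((g \<circ> g') a, (g \<circ> g') b) = c (id a, id b)"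
      using ge g'e ss' by simp
    show "(g \<circ> g') v = id v" using gv g'v by simp
  qed
  have g'g: "g' \<circ> g = id"
  proof (rule ext_unique)
    show "\<forall>a b. (a, b) \<in> E \<longrightarrow> ((g' \<circ> g) a, (g' \<circ> g) b) \<in> E" using ge g'e by simp
    show "\<forall>a b. (a, b) \<in> E \<longrightarrow> (id a, id b) \<in> E" by simp
    show "\<forall>a b. (a, b) \<in> E \<longrightarrow> c ((g' \<circ> g) a, (g' \<circ> g) b) = c (id a, id b)"
      using ge g'e s's by simp
    show "(g' \<circ> g) v = id v" using gv g'v by simp
  qed
  have p1: "g (g' x) = x" for x using gg' by (metis comp_apply id_apply)
  have p2: "g' (g x) = x" for x using g'g by (metis comp_apply id_apply)
  have bijg: "bij g"
    by (rule bij_betw_byWitness[of UNIV g' g UNIV]) (use p1 p2 in auto)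
  have autg: "g \<in> Aut E"
  proof (rule AutI[OF bijg], rule iffI)
    fix u w
    show "(u, w) \<in> E \<Longrightarrow> (g u, g w) \<in> E" using ge by blast
    assume "(g u, g w) \<in> E"
    then have "(g' (g u), g' (g w)) \<in> E" using g'e by blast
    then show "(u, w) \<in> E" using p2 by simp
  qed
  have Qg: "Q \<rho> g"
    unfolding Q_def
  proof (intro conjI autg gv allI ballI gside)
    fix a assume a: "a \<in> E"
    obtain a1 a2 where a12: "a = (a1, a2)" by (cases a)
    have "c (amap g a) = \<sigma> (c a)" using ge a a12 unfolding amap_def by simp
    then show "c a = hat X \<rho> (c (amap g a))" using s's unfolding \<sigma>'_def by simp
  qed
  show ?thesis
  proof (rule ex1I[of _ g])
    show "Q \<rho> g" by (rule Qg)
    fix h assume Qh: "Q \<rho> h"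
    have ah: "h \<in> Aut E" and hv: "h v = v" and hc: "\<forall>a\<in>E. c a = hat X \<rho> (c (amap h a))"
      using Qh unfolding Q_def by auto
    show "h = g"
    proof (rule ext_unique)
      show "\<forall>a b. (a, b) \<in> E \<longrightarrow> (h a, h b) \<in> E" using Aut_edge[OF ah] by blast
      show "\<forall>a b. (a, b) \<in> E \<longrightarrow> (g a, g b) \<in> E" using ge by blast
      show "\<forall>a b. (a, b) \<in> E \<longrightarrow> c (h a, h b) = c (g a, g b)"
      proof (intro allI impI)
        fix a b assume ab: "(a, b) \<in> E"
        have "c (a, b) = \<sigma>' (c (h a, h b))" using hc ab unfolding amap_def \<sigma>'_def by fastforce
        then have "\<sigma> (c (a, b)) = c (h a, h b)" using ss' by simp
        then show "c (h a, h b) = c (g a, g b)" using ge[OF ab] by simp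
      qed
      show "h v = g v" using hv gv by simp
    qed
  qed
qed

definition Gm :: "('c \<Rightarrow> 'c) \<Rightarrow> 'v \<Rightarrow> 'v" where
  "Gm \<mu> = (THE g. Q \<mu> g)"

lemma Bij_bij: "\<mu> \<in> Bij X \<Longrightarrow> bij_betw \<mu> X X"
  by (simp add: Bij_def)

lemma Gm_Q: assumes "\<mu> \<in> Bij X" shows "Q \<mu> (Gm \<mu>)"
  unfolding Gm_def by (rule theI'[OF aut_ex1[OF Bij_bij[OF assms]]])

lemma Gm_uniq: assumes "\<mu> \<in> Bij X" "Q \<mu> h" shows "Gm \<mu> = h"
proof -
  have "\<exists>g. Q \<mu> g \<and> (\<forall>y. Q \<mu> y \<longrightarrow> y = g)"
    using aut_ex1[OF Bij_bij[OF assms(1)]] unfolding Ex1_def .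
  then obtain g0 where u: "\<forall>y. Q \<mu> y \<longrightarrow> y = g0" by blast
  have "Gm \<mu> = g0" using u[rule_format, OF Gm_Q[OF assms(1)]] .
  moreover have "h = g0" using u[rule_format, OF assms(2)] .
  ultimately show ?thesis by simp
qed

lemma Gm_aut: "\<mu> \<in> Bij X \<Longrightarrow> Gm \<mu> \<in> Aut E"
  using Gm_Q unfolding Q_def by blast

lemma Gm_v: "\<mu> \<in> Bij X \<Longrightarrow> Gm \<mu> v = v"
  using Gm_Q unfolding Q_def by blast

lemma Gm_side: "\<mu> \<in> Bij X \<Longrightarrow> Gm \<mu> u \<in> VX \<longleftrightarrow> u \<in> VX"
  using Gm_Q unfolding Q_def by blast

lemma Gm_col: "\<mu> \<in> Bij X \<Longrightarrow> a \<in> E \<Longrightarrow> c a = hat X \<mu> (c (amap (Gm \<mu>) a))"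
  using Gm_Q unfolding Q_def by blast

lemma Bij_mem: "\<mu> \<in> Bij X \<Longrightarrow> x \<in> X \<Longrightarrow> \<mu> x \<in> X"
  using Bij_imp_funcset by blast

lemma Gm_comp:
  assumes m1: "\<mu> \<in> Bij X" and m2: "\<mu>' \<in> Bij X"
  shows "Gm \<mu> \<circ> Gm \<mu>' = Gm (compose X \<mu>' \<mu>)"
proof (rule sym, rule Gm_uniq)
  show "compose X \<mu>' \<mu> \<in> Bij X" by (rule compose_Bij[OF m2 m1])
  show "Q (compose X \<mu>' \<mu>) (Gm \<mu> \<circ> Gm \<mu>')"
    unfolding Q_def
  proof (intro conjI allI ballI)
    show "Gm \<mu> \<circ> Gm \<mu>' \<in> Aut E" by (rule Aut_comp[OF Gm_aut[OF m1] Gm_aut[OF m2]])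
    show "((Gm \<mu> \<circ> Gm \<mu>') u \<in> VX) = (u \<in> VX)" for u using Gm_side[OF m1] Gm_side[OF m2] by simp
    show "(Gm \<mu> \<circ> Gm \<mu>') v = v" using Gm_v[OF m1] Gm_v[OF m2] by simp
    fix a assume a: "a \<in> E"
    have a': "amap (Gm \<mu>') a \<in> E" by (rule amap_E[OF Gm_aut[OF m2] a])
    have am: "amap (Gm \<mu>) (amap (Gm \<mu>') a) = amap (Gm \<mu> \<circ> Gm \<mu>') a" unfolding amap_def by simp
    have hh: "hat X \<mu>' (hat X \<mu> z) = hat X (compose X \<mu>' \<mu>) z" for z
      using Bij_mem[OF m1] by (cases "z \<in> X") (simp_all add: hat_def compose_eq)
    have "c a = hat X \<mu>' (c (amap (Gm \<mu>') a))" by (rule Gm_col[OF m2 a])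
    also have "c (amap (Gm \<mu>') a) = hat X \<mu> (c (amap (Gm \<mu> \<circ> Gm \<mu>') a))"
      using Gm_col[OF m1 a'] am by simp
    finally show "c a = hat X (compose X \<mu>' \<mu>) (c (amap (Gm \<mu> \<circ> Gm \<mu>') a))" using hh by simp
  qed
qed

lemma Gm_one: "Gm (\<lambda>x\<in>X. x) = id"
proof (rule Gm_uniq)
  show "(\<lambda>x\<in>X. x) \<in> Bij X" by (rule id_Bij)
  show "Q (\<lambda>x\<in>X. x) id" unfolding Q_def using Aut_id
    by (auto simp: hat_def amap_def)
qed

lemma Gm_inj:
  assumes m1: "\<mu> \<in> Bij X" and m2: "\<mu>' \<in> Bij X" and eq: "Gm \<mu> = Gm \<mu>'"
  shows "\<mu> = \<mu>'"
proof (rule extensionalityI[OF Bij_imp_extensional[OF m1] Bij_imp_extensional[OF m2]])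
  fix x assume x: "x \<in> X"
  let ?g = "Gm \<mu>"
  obtain b where b: "(v, b) \<in> E" "c (v, b) = x" using col_ex[OF vX x] by blast
  have bg: "bij ?g" using Aut_bij[OF Gm_aut[OF m1]] .
  obtain b' where gb': "?g b' = b" using surjD[OF bij_is_surj[OF bg], of b] by metis
  have "(?g v, ?g b') \<in> E" using b(1) gb' Gm_v[OF m1] by simp
  then have e: "(v, b') \<in> E" using Aut_iff[OF Gm_aut[OF m1]] by simp
  have am: "amap ?g (v, b') = (v, b)" unfolding amap_def using gb' Gm_v[OF m1] by simp
  have "c (v, b') = hat X \<mu> x" using Gm_col[OF m1 e] am b(2) by simp
  moreover have "c (v, b') = hat X \<mu>' x" using Gm_col[OF m2 e] am b(2) eq by simp
  ultimately show "\<mu> x = \<mu>' x" using x by (simp add: hat_def)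
qed

lemma la_X:
  assumes m: "\<mu> \<in> Bij X" and u: "u \<in> VX"
  shows "local_action E c X (Gm \<mu>) u = (\<lambda>x\<in>X. inv_into X \<mu> x)"
  unfolding local_action_def
proof (rule restrict_ext)
  fix x assume x: "x \<in> X"
  let ?g = "Gm \<mu>"
  let ?a = "the_inv_into (arcs_out E u) c x"
  have bo: "bij_betw c (arcs_out E u) X" using bij_out[of u] u by simp
  have ain: "?a \<in> arcs_out E u"
    using the_inv_into_into[OF bij_betw_imp_inj_on[OF bo], of x "arcs_out E u"] x bij_betw_imp_surj_on[OF bo] by simp
  have ca: "c ?a = x" using bo x by (simp add: f_the_inv_into_f_bij_betw)
  have aE: "?a \<in> E" and fa: "fst ?a = u" using ain unfolding arcs_out_def by auto
  have e: "amap ?g ?a \<in> E" by (rule amap_E[OF Gm_aut[OF m] aE])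
  have "fst (amap ?g ?a) \<in> VX" using fa u Gm_side[OF m] unfolding amap_def by simp
  then have cx: "c (amap ?g ?a) \<in> X" using colX[of "fst (amap ?g ?a)" "snd (amap ?g ?a)"] e by simp
  define y where "y = c (amap ?g ?a)"
  have xy: "x = \<mu> y" using Gm_col[OF m aE] ca cx unfolding y_def by (simp add: hat_def)
  have yX: "y \<in> X" using cx unfolding y_def .
  have inj: "inj_on \<mu> X" using Bij_bij[OF m] by (simp add: bij_betw_def)
  have "inv_into X \<mu> x = y" using inv_into_f_f[OF inj yX] xy by simp
  then show "c (amap ?g ?a) = inv_into X \<mu> x" unfolding y_def by simp
qed

lemma la_Y:
  assumes m: "\<mu> \<in> Bij X" and u: "u \<notin> VX"
  shows "local_action E c Y (Gm \<mu>) u = (\<lambda>x\<in>Y. x)"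
  unfolding local_action_def
proof (rule restrict_ext)
  fix x assume x: "x \<in> Y"
  let ?g = "Gm \<mu>"
  let ?a = "the_inv_into (arcs_out E u) c x"
  have bo: "bij_betw c (arcs_out E u) Y" using bij_out[of u] u by simp
  have ain: "?a \<in> arcs_out E u"
    using the_inv_into_into[OF bij_betw_imp_inj_on[OF bo], of x "arcs_out E u"] x bij_betw_imp_surj_on[OF bo] by simp
  have ca: "c ?a = x" using bo x by (simp add: f_the_inv_into_f_bij_betw)
  have aE: "?a \<in> E" and fa: "fst ?a = u" using ain unfolding arcs_out_def by auto
  have e: "amap ?g ?a \<in> E" by (rule amap_E[OF Gm_aut[OF m] aE])
  have "fst (amap ?g ?a) \<notin> VX" using fa u Gm_side[OF m] unfolding amap_def by simp
  then have cx: "c (amap ?g ?a) \<in> Y" using colY[of "fst (amap ?g ?a)" "snd (amap ?g ?a)"] e by simp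
  then have "c (amap ?g ?a) \<notin> X" using disj by blast
  then show "c (amap ?g ?a) = x" using Gm_col[OF m aE] ca by (simp add: hat_def)
qed

end



lemma BijUNIV_mult: "bij g \<Longrightarrow> bij h \<Longrightarrow> mult (BijGroup UNIV) g h = g \<circ> h"
  by (simp add: BijGroup_def Bij_def compose_def restrict_UNIV comp_def)

lemma BijUNIV_one: "one (BijGroup UNIV) = id"
  by (simp add: BijGroup_def restrict_UNIV id_def)

lemma BijX_mult: "a \<in> Bij S \<Longrightarrow> b \<in> Bij S \<Longrightarrow> mult (BijGroup S) a b = compose S a b"
  by (simp add: BijGroup_def)

lemma BijX_one: "one (BijGroup S) = (\<lambda>x\<in>S. x)"
  by (simp add: BijGroup_def)

lemma BijX_carrier: "carrier (BijGroup S) = Bij S"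
  by (simp add: BijGroup_def)

lemma BijX_inv: "a \<in> Bij S \<Longrightarrow> m_inv (BijGroup S) a = (\<lambda>x\<in>S. inv_into S a x)"
proof -
  assume a: "a \<in> Bij S"
  interpret G: group "BijGroup S" by (rule group_BijGroup)
  show ?thesis
  proof (rule G.inv_equality)
    show "(\<lambda>x\<in>S. inv_into S a x) \<otimes>\<^bsub>BijGroup S\<^esub> a = \<one>\<^bsub>BijGroup S\<^esub>"
      using a restrict_inv_into_Bij[OF a] Bij_compose_restrict_eq[OF a]
      by (simp add: BijX_mult BijX_one)
    show "a \<in> carrier (BijGroup S)" using a by (simp add: BijX_carrier)
    show "(\<lambda>x\<in>S. inv_into S a x) \<in> carrier (BijGroup S)" using restrict_inv_into_Bij[OF a] by (simp add: BijX_carrier)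
  qed
qed

context tc begin

definition UC :: "('c \<Rightarrow> 'c) set \<Rightarrow> ('c \<Rightarrow> 'c) set \<Rightarrow> ('v \<Rightarrow> 'v) set" where
  "UC MA MB = {g \<in> Aut E. (\<forall>u. g u \<in> VX \<longleftrightarrow> u \<in> VX) \<and> (\<forall>u\<in>VX. local_action E c X g u \<in> MA)
      \<and> (\<forall>u\<in>VY. local_action E c Y g u \<in> MB)}"

lemma Gm_stab:
  assumes MA: "subgroup MA (BijGroup X)" and MB: "subgroup MB (BijGroup Y)" and m: "\<mu> \<in> MA"
  shows "Gm \<mu> \<in> stab (UC MA MB) v"
proof -
  have mB: "\<mu> \<in> Bij X" using subgroup.subset[OF MA] m by (auto simp: BijX_carrier)
  have "local_action E c X (Gm \<mu>) u \<in> MA" if "u \<in> VX" for u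
  proof -
    have "local_action E c X (Gm \<mu>) u = m_inv (BijGroup X) \<mu>"
      using la_X[OF mB that] BijX_inv[OF mB] by simp
    then show ?thesis using subgroup.m_inv_closed[OF MA m] by simp
  qed
  moreover have "local_action E c Y (Gm \<mu>) u \<in> MB" if "u \<in> VY" for u
  proof -
    have "u \<notin> VX" using that VY_eq by simp
    then have "local_action E c Y (Gm \<mu>) u = one (BijGroup Y)"
      using la_Y[OF mB \<open>u \<notin> VX\<close>] by (simp add: BijX_one)
    then show ?thesis using subgroup.one_closed[OF MB] by simp
  qed
  ultimately show ?thesis
    unfolding stab_def UC_def using Gm_aut[OF mB] Gm_side[OF mB] Gm_v[OF mB] by blast
qed

lemma main_sub:
  assumes MA: "subgroup MA (BijGroup X)" and MB: "subgroup MB (BijGroup Y)"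
  shows "subgroup (Gm ` MA) ((BijGroup UNIV)\<lparr>carrier := stab (UC MA MB) v\<rparr>)"
proof -
  interpret BX: group "BijGroup X" by (rule group_BijGroup)
  have MAB: "\<And>\<mu>. \<mu> \<in> MA \<Longrightarrow> \<mu> \<in> Bij X" using subgroup.subset[OF MA] by (auto simp: BijX_carrier)
  have gbij: "\<And>\<mu>. \<mu> \<in> MA \<Longrightarrow> bij (Gm \<mu>)" using MAB Gm_aut Aut_bij by blast
  have stabbij: "\<And>y. y \<in> stab (UC MA MB) v \<Longrightarrow> bij y"
    unfolding stab_def UC_def using Aut_bij by blast
  have comp: "Gm \<mu> \<circ> Gm \<mu>' = Gm (mult (BijGroup X) \<mu>' \<mu>)" if "\<mu> \<in> MA" "\<mu>' \<in> MA" for \<mu> \<mu>'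
    using Gm_comp[OF MAB[OF that(1)] MAB[OF that(2)]] BijX_mult[OF MAB[OF that(2)] MAB[OF that(1)]] by simp
  show ?thesis
  proof
    show "Gm ` MA \<subseteq> carrier (BijGroup UNIV\<lparr>carrier := stab (UC MA MB) v\<rparr>)"
      using Gm_stab[OF MA MB] by auto
    fix x y assume x: "x \<in> Gm ` MA" and y: "y \<in> Gm ` MA"
    then obtain \<mu> \<mu>' where m: "\<mu> \<in> MA" "\<mu>' \<in> MA" and xy: "x = Gm \<mu>" "y = Gm \<mu>'" by blast
    have "x \<otimes>\<^bsub>BijGroup UNIV\<lparr>carrier := stab (UC MA MB) v\<rparr>\<^esub> y = Gm \<mu> \<circ> Gm \<mu>'"
      using xy gbij[OF m(1)] gbij[OF m(2)] by (simp add: BijUNIV_mult)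
    also have "\<dots> = Gm (mult (BijGroup X) \<mu>' \<mu>)" by (rule comp[OF m])
    finally show "x \<otimes>\<^bsub>BijGroup UNIV\<lparr>carrier := stab (UC MA MB) v\<rparr>\<^esub> y \<in> Gm ` MA"
      using subgroup.m_closed[OF MA m(2) m(1)] by simp
  next
    have "one (BijGroup X) \<in> MA" by (rule subgroup.one_closed[OF MA])
    moreover have "Gm (one (BijGroup X)) = id" using Gm_one by (simp add: BijX_one)
    ultimately have "id \<in> Gm ` MA" by (metis image_eqI)
    then show "\<one>\<^bsub>BijGroup UNIV\<lparr>carrier := stab (UC MA MB) v\<rparr>\<^esub> \<in> Gm ` MA"
      by (simp add: BijUNIV_one)
  next
    fix x assume x: "x \<in> Gm ` MA"
    then obtain \<mu> where m: "\<mu> \<in> MA" and xm: "x = Gm \<mu>" by blast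
    define \<nu> where "\<nu> = m_inv (BijGroup X) \<mu>"
    have n: "\<nu> \<in> MA" unfolding \<nu>_def by (rule subgroup.m_inv_closed[OF MA m])
    have mc: "\<mu> \<in> carrier (BijGroup X)" using MAB[OF m] by (simp add: BijX_carrier)
    have e1: "Gm \<mu> \<circ> Gm \<nu> = id"
      using comp[OF m n] BX.l_inv[OF mc] Gm_one unfolding \<nu>_def by (simp add: BijX_one)
    have e2: "Gm \<nu> \<circ> Gm \<mu> = id"
      using comp[OF n m] BX.r_inv[OF mc] Gm_one unfolding \<nu>_def by (simp add: BijX_one)
    let ?G = "BijGroup UNIV\<lparr>carrier := stab (UC MA MB) v\<rparr>"
    have "m_inv ?G x = Gm \<nu>"
      unfolding m_inv_def
    proof (rule the_equality)
      have "x \<otimes>\<^bsub>?G\<^esub> Gm \<nu> = id" using e1 xm gbij[OF m] gbij[OF n] by (simp add: BijUNIV_mult)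
      moreover have "Gm \<nu> \<otimes>\<^bsub>?G\<^esub> x = id" using e2 xm gbij[OF m] gbij[OF n] by (simp add: BijUNIV_mult)
      ultimately show "Gm \<nu> \<in> carrier ?G \<and> x \<otimes>\<^bsub>?G\<^esub> Gm \<nu> = \<one>\<^bsub>?G\<^esub> \<and> Gm \<nu> \<otimes>\<^bsub>?G\<^esub> x = \<one>\<^bsub>?G\<^esub>"
        using Gm_stab[OF MA MB n] by (simp add: BijUNIV_one)
    next
      fix y assume "y \<in> carrier ?G \<and> x \<otimes>\<^bsub>?G\<^esub> y = \<one>\<^bsub>?G\<^esub> \<and> y \<otimes>\<^bsub>?G\<^esub> x = \<one>\<^bsub>?G\<^esub>"
      then have yc: "y \<in> stab (UC MA MB) v" and yx: "y \<otimes>\<^bsub>BijGroup UNIV\<^esub> x = id"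
        by (auto simp: BijUNIV_one)
      have "y \<circ> Gm \<mu> = id" using yx stabbij[OF yc] gbij[OF m] xm by (simp add: BijUNIV_mult)
      have "y = y \<circ> (Gm \<mu> \<circ> Gm \<nu>)" using e1 by simp
      also have "\<dots> = (y \<circ> Gm \<mu>) \<circ> Gm \<nu>" by (simp add: comp_assoc)
      also have "\<dots> = Gm \<nu>" using \<open>y \<circ> Gm \<mu> = id\<close> by simp
      finally show "y = Gm \<nu>" .
    qed
    then show "m_inv ?G x \<in> Gm ` MA" using n by simp
  qed
qed

lemma main_iso:
  assumes MA: "subgroup MA (BijGroup X)"
  shows "(BijGroup UNIV)\<lparr>carrier := Gm ` MA\<rparr> \<cong> (BijGroup X)\<lparr>carrier := MA\<rparr>"
proof -
  interpret BX: group "BijGroup X" by (rule group_BijGroup)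
  have grp: "group ((BijGroup X)\<lparr>carrier := MA\<rparr>)"
    by (rule subgroup.subgroup_is_group[OF MA group_BijGroup])
  have MAB: "\<And>\<mu>. \<mu> \<in> MA \<Longrightarrow> \<mu> \<in> Bij X" using subgroup.subset[OF MA] by (auto simp: BijX_carrier)
  have MAc: "\<And>\<mu>. \<mu> \<in> MA \<Longrightarrow> \<mu> \<in> carrier (BijGroup X)" using MAB by (simp add: BijX_carrier)
  have gbij: "\<And>\<mu>. \<mu> \<in> MA \<Longrightarrow> bij (Gm \<mu>)" using MAB Gm_aut Aut_bij by blast
  have invM: "\<And>\<mu>. \<mu> \<in> MA \<Longrightarrow> m_inv (BijGroup X) \<mu> \<in> MA" using subgroup.m_inv_closed[OF MA] by blast
  define \<phi> where "\<phi> \<mu> = Gm (m_inv (BijGroup X) \<mu>)" for \<mu>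
  have "\<phi> \<in> iso ((BijGroup X)\<lparr>carrier := MA\<rparr>) ((BijGroup UNIV)\<lparr>carrier := Gm ` MA\<rparr>)"
  proof (rule isoI)
    show "\<phi> \<in> hom ((BijGroup X)\<lparr>carrier := MA\<rparr>) ((BijGroup UNIV)\<lparr>carrier := Gm ` MA\<rparr>)"
      unfolding hom_def
    proof (intro CollectI conjI ballI)
      show "\<phi> \<in> carrier (BijGroup X\<lparr>carrier := MA\<rparr>) \<rightarrow> carrier (BijGroup UNIV\<lparr>carrier := Gm ` MA\<rparr>)"
        unfolding \<phi>_def using invM by auto
      fix x y assume "x \<in> carrier (BijGroup X\<lparr>carrier := MA\<rparr>)" "y \<in> carrier (BijGroup X\<lparr>carrier := MA\<rparr>)"
      then have x: "x \<in> MA" and y: "y \<in> MA" by auto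
      have "\<phi> (x \<otimes>\<^bsub>BijGroup X\<lparr>carrier := MA\<rparr>\<^esub> y) = Gm (m_inv (BijGroup X) (x \<otimes>\<^bsub>BijGroup X\<^esub> y))"
        unfolding \<phi>_def by simp
      also have "\<dots> = Gm (m_inv (BijGroup X) y \<otimes>\<^bsub>BijGroup X\<^esub> m_inv (BijGroup X) x)"
        using BX.inv_mult_group[OF MAc[OF x] MAc[OF y]] by simp
      also have "\<dots> = Gm (compose X (m_inv (BijGroup X) y) (m_inv (BijGroup X) x))"
        using BijX_mult[OF MAB[OF invM[OF y]] MAB[OF invM[OF x]]] by simp
      also have "\<dots> = \<phi> x \<circ> \<phi> y"
        unfolding \<phi>_def using Gm_comp[OF MAB[OF invM[OF x]] MAB[OF invM[OF y]]] by simp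
      also have "\<dots> = \<phi> x \<otimes>\<^bsub>BijGroup UNIV\<lparr>carrier := Gm ` MA\<rparr>\<^esub> \<phi> y"
        unfolding \<phi>_def using gbij[OF invM[OF x]] gbij[OF invM[OF y]] by (simp add: BijUNIV_mult)
      finally show "\<phi> (x \<otimes>\<^bsub>BijGroup X\<lparr>carrier := MA\<rparr>\<^esub> y) = \<phi> x \<otimes>\<^bsub>BijGroup UNIV\<lparr>carrier := Gm ` MA\<rparr>\<^esub> \<phi> y" .
    qed
    show "bij_betw \<phi> (carrier (BijGroup X\<lparr>carrier := MA\<rparr>)) (carrier (BijGroup UNIV\<lparr>carrier := Gm ` MA\<rparr>))"
    proof -
      have "inj_on \<phi> MA"
      proof (rule inj_onI)
        fix x y assume x: "x \<in> MA" and y: "y \<in> MA" and eq: "\<phi> x = \<phi> y"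
        have "m_inv (BijGroup X) x = m_inv (BijGroup X) y"
          using Gm_inj[OF MAB[OF invM[OF x]] MAB[OF invM[OF y]]] eq unfolding \<phi>_def by simp
        then show "x = y" using BX.inv_inv[OF MAc[OF x]] BX.inv_inv[OF MAc[OF y]] by metis
      qed
      moreover have "\<phi> ` MA = Gm ` MA"
      proof
        show "\<phi> ` MA \<subseteq> Gm ` MA" unfolding \<phi>_def using invM by auto
        show "Gm ` MA \<subseteq> \<phi> ` MA"
        proof
          fix g assume "g \<in> Gm ` MA"
          then obtain \<mu> where m: "\<mu> \<in> MA" and g: "g = Gm \<mu>" by blast
          have "\<phi> (m_inv (BijGroup X) \<mu>) = g" unfolding \<phi>_def g using BX.inv_inv[OF MAc[OF m]] by simp
          then show "g \<in> \<phi> ` MA" using invM[OF m] by (metis image_eqI)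
        qed
      qed
      ultimately show ?thesis by (simp add: bij_betw_def)
    qed
  qed
  then have "(BijGroup X)\<lparr>carrier := MA\<rparr> \<cong> (BijGroup UNIV)\<lparr>carrier := Gm ` MA\<rparr>" by (rule is_isoI)
  then show ?thesis by (rule group.iso_sym[OF grp])
qed

end



lemma bij_img_iff: "bij g \<Longrightarrow> g ` S = S \<longleftrightarrow> (\<forall>u. g u \<in> S \<longleftrightarrow> u \<in> S)"
proof
  assume b: "bij g" and e: "g ` S = S"
  show "\<forall>u. g u \<in> S \<longleftrightarrow> u \<in> S"
  proof
    fix u
    have "g u \<in> g ` S \<longleftrightarrow> u \<in> S" using bij_is_inj[OF b] by (simp add: inj_image_mem_iff)
    then show "g u \<in> S \<longleftrightarrow> u \<in> S" using e by simp
  qed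
next
  assume b: "bij g" and h: "\<forall>u. g u \<in> S \<longleftrightarrow> u \<in> S"
  show "g ` S = S"
  proof
    show "g ` S \<subseteq> S" using h by blast
    show "S \<subseteq> g ` S"
    proof
      fix x assume x: "x \<in> S"
      obtain y where y: "x = g y" using surjD[OF bij_is_surj[OF b], of x] by blast
      then have "y \<in> S" using h x by blast
      then show "x \<in> g ` S" using y by blast
    qed
  qed
qed

theorem proposition3p9:
  fixes E :: "('v \<times> 'v) set" and VX VY :: "'v set"
    and X Y :: "'c set" and c :: "'v \<times> 'v \<Rightarrow> 'c"
    and M N :: "('c \<Rightarrow> 'c) set" and v w :: 'v
  assumes disj: "X \<inter> Y = {}"
    and X2: "\<exists>x1 \<in> X. \<exists>x2 \<in> X. x1 \<noteq> x2"
    and Y2: "\<exists>y1 \<in> Y. \<exists>y2 \<in> Y. y1 \<noteq> y2"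
    and M: "subgroup M (BijGroup X)" and M_nontriv: "\<exists>\<mu> \<in> M. \<exists>x \<in> X. \<mu> x \<noteq> x"
    and N: "subgroup N (BijGroup Y)" and N_nontriv: "\<exists>\<tau> \<in> N. \<exists>y \<in> Y. \<tau> y \<noteq> y"
    and tree: "is_tree E"
    and bip: "bipartition E VX VY"
    and col: "legal_colouring E VX VY X Y c"
    and v: "v \<in> VX" and w: "w \<in> VY"
  shows "subgroup ((\<lambda>\<mu>. g_at E VX c X \<mu> v) ` M)
           ((BijGroup UNIV)\<lparr>carrier := stab (U_c E VX VY X Y c M N) v\<rparr>)
       \<and> subgroup ((\<lambda>\<tau>. g_at E VX c Y \<tau> w) ` N)
           ((BijGroup UNIV)\<lparr>carrier := stab (U_c E VX VY X Y c M N) w\<rparr>)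
       \<and> (BijGroup UNIV)\<lparr>carrier := (\<lambda>\<mu>. g_at E VX c X \<mu> v) ` M\<rparr> \<cong> (BijGroup X)\<lparr>carrier := M\<rparr>
       \<and> (BijGroup UNIV)\<lparr>carrier := (\<lambda>\<tau>. g_at E VX c Y \<tau> w) ` N\<rparr> \<cong> (BijGroup Y)\<lparr>carrier := N\<rparr>"
proof -
  interpret A: tc E VX VY X Y c v by (rule tc.intro[OF tree bip col disj v])
  have bipB: "bipartition E VY VX"
    unfolding bipartition_def
  proof (intro conjI)
    show "VY \<inter> VX = {}" using A.VY_eq by auto
    show "VY \<union> VX = UNIV" using A.VY_eq by auto
    show "\<forall>(u, w)\<in>E. u \<in> VY \<and> w \<in> VX \<or> u \<in> VX \<and> w \<in> VY" by (auto dest: A.bipE)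
  qed
  have colB: "legal_colouring E VY VX Y X c"
    using col unfolding legal_colouring_def
    apply (elim conjE)
    apply (intro conjI)
      apply assumption+
    done
  have disjB: "Y \<inter> X = {}" using disj by auto
  interpret B: tc E VY VX Y X c w by (rule tc.intro[OF tree bipB colB disjB w])
  have sideB: "(\<forall>u. g u \<in> VY \<longleftrightarrow> u \<in> VY) \<longleftrightarrow> (\<forall>u. g u \<in> VX \<longleftrightarrow> u \<in> VX)" for g :: "'v \<Rightarrow> 'v"
    using A.VY_eq by simp
  have sideA: "g \<in> Aut E \<Longrightarrow> g ` VX = VX \<longleftrightarrow> (\<forall>u. g u \<in> VX \<longleftrightarrow> u \<in> VX)" for g
    using bij_img_iff[OF Aut_bij] by blast
  have eqA: "(\<lambda>\<mu>. g_at E VX c X \<mu> v) = A.Gm"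
  proof
    fix \<mu>
    show "g_at E VX c X \<mu> v = A.Gm \<mu>"
      unfolding g_at_def A.Gm_def A.Q_def
    proof (rule arg_cong[where f = The], rule ext)
      fix g
      show "(g \<in> Aut E \<and> g ` VX = VX \<and> g v = v \<and> (\<forall>a\<in>E. c a = hat X \<mu> (c (amap g a)))) =
            (g \<in> Aut E \<and> (\<forall>u. (g u \<in> VX) = (u \<in> VX)) \<and> g v = v \<and> (\<forall>a\<in>E. c a = hat X \<mu> (c (amap g a))))"
        using sideA[of g] by blast
    qed
  qed
  have eqB: "(\<lambda>\<tau>. g_at E VX c Y \<tau> w) = B.Gm"
  proof
    fix \<tau>
    show "g_at E VX c Y \<tau> w = B.Gm \<tau>"
      unfolding g_at_def B.Gm_def B.Q_def
    proof (rule arg_cong[where f = The], rule ext)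
      fix g
      show "(g \<in> Aut E \<and> g ` VX = VX \<and> g w = w \<and> (\<forall>a\<in>E. c a = hat Y \<tau> (c (amap g a)))) =
            (g \<in> Aut E \<and> (\<forall>u. (g u \<in> VY) = (u \<in> VY)) \<and> g w = w \<and> (\<forall>a\<in>E. c a = hat Y \<tau> (c (amap g a))))"
        using sideA[of g] sideB[of g] by blast
    qed
  qed
  have UA: "U_c E VX VY X Y c M N = A.UC M N"
    unfolding U_c_def A.UC_def
  proof (rule Collect_cong)
    fix g
    show "(g \<in> Aut E \<and> g ` VX = VX \<and> (\<forall>v\<in>VX. local_action E c X g v \<in> M) \<and> (\<forall>v\<in>VY. local_action E c Y g v \<in> N)) =
          (g \<in> Aut E \<and> (\<forall>u. (g u \<in> VX) = (u \<in> VX)) \<and> (\<forall>u\<in>VX. local_action E c X g u \<in> M) \<and> (\<forall>u\<in>VY. local_action E c Y g u \<in> N))"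
      using sideA[of g] by blast
  qed
  have UB: "U_c E VX VY X Y c M N = B.UC N M"
    unfolding U_c_def B.UC_def
  proof (rule Collect_cong)
    fix g
    show "(g \<in> Aut E \<and> g ` VX = VX \<and> (\<forall>v\<in>VX. local_action E c X g v \<in> M) \<and> (\<forall>v\<in>VY. local_action E c Y g v \<in> N)) =
          (g \<in> Aut E \<and> (\<forall>u. (g u \<in> VY) = (u \<in> VY)) \<and> (\<forall>u\<in>VY. local_action E c Y g u \<in> N) \<and> (\<forall>u\<in>VX. local_action E c X g u \<in> M))"
      using sideA[of g] sideB[of g] by blast
  qed
  show ?thesis
    unfolding eqA eqB
  proof (intro conjI)
    show "subgroup (A.Gm ` M) (BijGroup UNIV\<lparr>carrier := stab (U_c E VX VY X Y c M N) v\<rparr>)"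
      unfolding UA by (rule A.main_sub[OF M N])
    show "subgroup (B.Gm ` N) (BijGroup UNIV\<lparr>carrier := stab (U_c E VX VY X Y c M N) w\<rparr>)"
      unfolding UB by (rule B.main_sub[OF N M])
    show "BijGroup UNIV\<lparr>carrier := A.Gm ` M\<rparr> \<cong> BijGroup X\<lparr>carrier := M\<rparr>" by (rule A.main_iso[OF M])
    show "BijGroup UNIV\<lparr>carrier := B.Gm ` N\<rparr> \<cong> BijGroup Y\<lparr>carrier := N\<rparr>" by (rule B.main_iso[OF N])
  qed
qed


end
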